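(* Let $\overline{X}\in\mathbb{R}^{d\times n}$ be a matrix with all columns equal to some $\overline{\mathbf{x}}\in\mathbb{R}^d$, let $\xi = (\xi_1,\dots,\xi_n)$ with $\xi_i\sim\mathcal{D}_i$ independent, and let $W^*(\xi)\in\mathcal{M}_w$ be any mixing matrix (possibly depending on $\xi$). Assume $\frac1n\sum_{i=1}^n\mathbb{E}_{\xi_i}\|\nabla F_i(\mathbf{x},\xi_i) - \nabla f_i(\mathbf{x})\|^2\leq\sigma^2$ for all $\mathbf{x}$. Then $$\mathbb{E}\big\|(\partial f(\overline{X}) - \overline{\partial f}(\overline{X}))W^*(\xi)\big\|_F^2 \leq 2\,\mathbb{E}\big\|(\partial f(\overline{X},\xi) - \overline{\partial f}(\overline{X},\xi))W^*(\xi)\big\|_F^2 + 2n\sigma^2.$$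
   Context: $f_i(\mathbf{x}) = \mathbb{E}_{\xi\sim\mathcal{D}_i}F_i(\mathbf{x},\xi)$. For $X = [\mathbf{x}_1,\dots,\mathbf{x}_n]$: $\partial f(X) = [\nabla f_1(\mathbf{x}_1),\dots,\nabla f_n(\mathbf{x}_n)]$, $\partial f(X,\xi) = [\nabla F_1(\mathbf{x}_1,\xi_1),\dots,\nabla F_n(\mathbf{x}_n,\xi_n)]$, and for any $Y\in\mathbb{R}^{d\times n}$, $\overline{Y} = Y\frac{\mathbf{1}\mathbf{1}^\top}{n}$ (so $\overline{\partial f}(X) = \partial f(X)\frac{\mathbf{1}\mathbf{1}^\top}{n}$, $\overline{\partial f}(X,\xi) = \partial f(X,\xi)\frac{\mathbf{1}\mathbf{1}^\top}{n}$). Given a graph $G=(V,E)$ on $n$ nodes, $\mathcal{M}_w = \{W\in\mathbb{R}^{n\times n}: W\mathbf{1} = \mathbf{1},\ \mathbf{1}^\top W = \mathbf{1}^\top,\ 0\le w_{ij}\le1,\ w_{ij}=0\ \forall(i,j)\notin E\}$. Expectations are over $\xi$. *)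

theory Defs
  imports "HOL-Probability.Probability"
begin

text \<open>Matrices in R^(d x n) are rendered as real^'n^'d (rows indexed by 'd, columns by 'n);
  n x n mixing matrices as real^'n^'n.  The matrix product is (**).\<close>

definition colmat :: "('n::finite \<Rightarrow> real^'d) \<Rightarrow> real^'n^'d" where
  "colmat v = (\<chi> k j. v j $ k)"

definition avg_mat :: "real^'n::finite^'d \<Rightarrow> real^'n^'d" where
  "avg_mat Y = Y ** (\<chi> i j. 1 / real CARD('n))"

definition frob_sq :: "real^'n::finite^'d::finite \<Rightarrow> real" where
  "frob_sq A = (\<Sum>k\<in>UNIV. \<Sum>j\<in>UNIV. (A $ k $ j)^2)"

definition mixing_set :: "('n::finite \<times> 'n) set \<Rightarrow> (real^'n^'n) set" where
  "mixing_set E = {W. (\<forall>i. (\<Sum>j\<in>UNIV. W $ i $ j) = 1) \<and> (\<forall>j. (\<Sum>i\<in>UNIV. W $ i $ j) = 1)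
      \<and> (\<forall>i j. 0 \<le> W $ i $ j \<and> W $ i $ j \<le> 1) \<and> (\<forall>i j. (i, j) \<notin> E \<longrightarrow> W $ i $ j = 0)}"

end

theory Submission imports Defs begin

lemma avg_sub: "avg_mat (X - Y) = avg_mat X - avg_mat (Y::real^'n::finite^'d)"
  by (simp add: avg_mat_def matrix_matrix_mult_def vec_eq_iff sum_subtractf algebra_simps)

lemma frob_add: "frob_sq (X + Y) \<le> 2*frob_sq X + 2*frob_sq (Y::real^'n::finite^'d::finite)"
proof -
  have "(X $ k $ j + Y $ k $ j)^2 \<le> 2*(X $ k $ j)^2 + 2*(Y $ k $ j)^2" for k j
    by (smt (verit) sum_squares_bound power2_sum zero_le_power2 power2_diff)
  then show ?thesis unfolding frob_sq_def
    by (simp add: sum_distrib_left sum.distrib[symmetric] sum_mono)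
qed

lemma frob_colmat: "frob_sq (colmat v) = (\<Sum>j\<in>UNIV. (norm (v j))^2)"
proof -
  have n: "(norm (v j))^2 = (\<Sum>k\<in>UNIV. (v j $ k)^2)" for j
    unfolding norm_vec_def L2_set_def by (subst real_sqrt_pow2) (auto intro: sum_nonneg)
  have "frob_sq (colmat v) = (\<Sum>k\<in>UNIV. \<Sum>j\<in>UNIV. (v j $ k)^2)"
    unfolding frob_sq_def colmat_def by simp
  also have "\<dots> = (\<Sum>j\<in>UNIV. \<Sum>k\<in>UNIV. (v j $ k)^2)"
    by (rule sum.swap)
  finally show ?thesis by (simp add: n)
qed

lemma center: "(\<Sum>i\<in>UNIV. (r i - (\<Sum>l\<in>UNIV. r l) / real CARD('n))^2) \<le> (\<Sum>i\<in>(UNIV::'n::finite set). (r i)^2)"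
proof -
  define m where "m = (\<Sum>l\<in>UNIV. r l) / real CARD('n)"
  have s: "(\<Sum>l\<in>UNIV. r l) = real CARD('n) * m" unfolding m_def by simp
  have "(\<Sum>i\<in>UNIV. (r i - m)^2) = (\<Sum>i\<in>UNIV. (r i)^2) - 2*m*(\<Sum>i\<in>UNIV. r i) + real CARD('n) * m^2"
    by (simp add: power2_diff sum.distrib sum_subtractf sum_distrib_left[symmetric] algebra_simps sum_distrib_right[symmetric])
  also have "\<dots> = (\<Sum>i\<in>UNIV. (r i)^2) - real CARD('n) * m^2"
    by (simp add: s power2_eq_square)
  also have "\<dots> \<le> (\<Sum>i\<in>UNIV. (r i)^2)" by simp
  finally show ?thesis unfolding m_def .
qed

lemma rowbound:
  assumes "W \<in> mixing_set E"
  shows "(\<Sum>j\<in>UNIV. (\<Sum>i\<in>UNIV. s i * W $ i $ j)^2) \<le> (\<Sum>i\<in>(UNIV::'n::finite set). (s i)^2)"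
proof -
  have rs: "\<And>i. (\<Sum>j\<in>UNIV. W $ i $ j) = 1" and cs: "\<And>j. (\<Sum>i\<in>UNIV. W $ i $ j) = 1"
    and nn: "\<And>i j. 0 \<le> W $ i $ j" using assms by (auto simp: mixing_set_def)
  have "(\<Sum>i\<in>UNIV. s i * W $ i $ j)^2 \<le> (\<Sum>i\<in>UNIV. W $ i $ j * (s i)^2)" for j
  proof -
    have "(\<Sum>i\<in>UNIV. s i * W $ i $ j)^2 = (\<Sum>i\<in>UNIV. (sqrt (W $ i $ j)) * (sqrt (W $ i $ j) * s i))^2"
    proof (rule arg_cong[where f="\<lambda>x. x^2"], rule sum.cong[OF refl])
      fix i
      have w: "sqrt (W $ i $ j) * sqrt (W $ i $ j) = W $ i $ j"
        using nn[of i j] real_sqrt_mult_self abs_of_nonneg by metis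
      have "sqrt (W $ i $ j) * (sqrt (W $ i $ j) * s i) = (sqrt (W $ i $ j) * sqrt (W $ i $ j)) * s i"
        by (rule mult.assoc[symmetric])
      then show "s i * W $ i $ j = sqrt (W $ i $ j) * (sqrt (W $ i $ j) * s i)" by (metis w mult.commute)
    qed
    also have "\<dots> \<le> (\<Sum>i\<in>UNIV. (sqrt (W $ i $ j))^2) * (\<Sum>i\<in>UNIV. (sqrt (W $ i $ j) * s i)^2)"
      by (rule Cauchy_Schwarz_ineq_sum)
    also have "\<dots> = (\<Sum>i\<in>UNIV. W $ i $ j * (s i)^2)"
      using nn cs by (simp add: power_mult_distrib)
    finally show ?thesis .
  qed
  then have "(\<Sum>j\<in>UNIV. (\<Sum>i\<in>UNIV. s i * W $ i $ j)^2) \<le> (\<Sum>j\<in>UNIV. \<Sum>i\<in>UNIV. W $ i $ j * (s i)^2)"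
    by (rule sum_mono)
  also have "\<dots> = (\<Sum>i\<in>UNIV. (s i)^2 * (\<Sum>j\<in>UNIV. W $ i $ j))"
  proof -
    have "(\<Sum>j\<in>UNIV. \<Sum>i\<in>UNIV. W $ i $ j * (s i)^2) = (\<Sum>i\<in>UNIV. \<Sum>j\<in>UNIV. W $ i $ j * (s i)^2)"
      by (rule sum.swap)
    also have "\<dots> = (\<Sum>i\<in>UNIV. (s i)^2 * (\<Sum>j\<in>UNIV. W $ i $ j))"
      by (rule sum.cong[OF refl]) (metis sum_distrib_right mult.commute)
    finally show ?thesis .
  qed
  also have "\<dots> = (\<Sum>i\<in>UNIV. (s i)^2)" using rs by simp
  finally show ?thesis .
qed

lemma mix_bound:
  assumes "W \<in> mixing_set E"
  shows "frob_sq ((C - avg_mat C) ** W) \<le> frob_sq (C::real^'n::finite^'d::finite)"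
proof -
  have "frob_sq ((C - avg_mat C) ** W) = (\<Sum>k\<in>UNIV. \<Sum>j\<in>UNIV. (\<Sum>i\<in>UNIV. (C$k$i - (\<Sum>l\<in>UNIV. C$k$l) / real CARD('n)) * W $ i $ j)^2)"
    unfolding frob_sq_def avg_mat_def by (simp add: matrix_matrix_mult_def sum_divide_distrib)
  also have "\<dots> \<le> (\<Sum>k\<in>UNIV. \<Sum>i\<in>UNIV. (C$k$i - (\<Sum>l\<in>UNIV. C$k$l) / real CARD('n))^2)"
    by (intro sum_mono rowbound[OF assms])
  also have "\<dots> \<le> (\<Sum>k\<in>UNIV. \<Sum>i\<in>UNIV. (C$k$i)^2)"
    by (intro sum_mono center)
  finally show ?thesis unfolding frob_sq_def .
qed

lemma mat_rdistrib: "(X + Y) ** (W::real^'n::finite^'n) = X ** W + Y ** (W::real^'n^'n)"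
  for X Y :: "real^'n^'d::finite"
  by (simp add: matrix_matrix_mult_def vec_eq_iff sum.distrib algebra_simps)

lemma meas_nth2:
  fixes Wm :: "'a \<Rightarrow> real^'n::finite^'m::finite"
  assumes "Wm \<in> borel_measurable M"
  shows "(\<lambda>x. Wm x $ i $ j :: real) \<in> borel_measurable M"
proof -
  have "continuous_on UNIV (\<lambda>W::real^'n::finite^'m::finite. W $ i $ j)"
    by (intro continuous_intros)
  then have "(\<lambda>W::real^'n::finite^'m::finite. W $ i $ j) \<in> borel_measurable borel"
    by (rule borel_measurable_continuous_onI)
  from measurable_compose[OF assms this] show ?thesis by (simp add: o_def)
qed

lemma meas_nth1:
  fixes Wm :: "'a \<Rightarrow> real^'m::finite"
  assumes "Wm \<in> borel_measurable M"
  shows "(\<lambda>x. Wm x $ i) \<in> borel_measurable M"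
proof -
  have "continuous_on UNIV (\<lambda>W::real^'m::finite. W $ i)"
    by (intro continuous_intros)
  then have "(\<lambda>W::real^'m::finite. W $ i) \<in> borel_measurable borel"
    by (rule borel_measurable_continuous_onI)
  from measurable_compose[OF assms this] show ?thesis by (simp add: o_def)
qed

theorem proposition2:
  fixes D :: "'n::finite \<Rightarrow> 'b measure"
    and F :: "'n \<Rightarrow> real^'d::finite \<Rightarrow> 'b \<Rightarrow> real"
    and f :: "'n \<Rightarrow> real^'d \<Rightarrow> real"
    and gF :: "'n \<Rightarrow> real^'d \<Rightarrow> 'b \<Rightarrow> real^'d"
    and gf :: "'n \<Rightarrow> real^'d \<Rightarrow> real^'d"
    and E :: "('n \<times> 'n) set"
    and Wstar :: "('n \<Rightarrow> 'b) \<Rightarrow> real^'n^'n"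
    and xbar :: "real^'d"
    and \<sigma> :: real
  assumes prob: "\<And>i. prob_space (D i)"
    and f_def: "\<And>i x. f i x = (\<integral>\<xi>. F i x \<xi> \<partial>D i)"
    and gradF: "\<And>i x \<xi>. \<xi> \<in> space (D i) \<Longrightarrow> GDERIV (\<lambda>y. F i y \<xi>) x :> gF i x \<xi>"
    and gradf: "\<And>i x. GDERIV (f i) x :> gf i x"
    and gF_meas: "\<And>i x. gF i x \<in> borel_measurable (D i)"
    and var_int: "\<And>i x. integrable (D i) (\<lambda>\<xi>. (norm (gF i x \<xi> - gf i x))^2)"
    and var_bound: "\<And>x. (1 / real CARD('n)) *
        (\<Sum>i\<in>UNIV. \<integral>\<xi>. (norm (gF i x \<xi> - gf i x))^2 \<partial>D i) \<le> \<sigma>^2"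
    and W_meas: "Wstar \<in> borel_measurable (PiM UNIV D)"
    and W_mix: "\<And>\<xi>. \<xi> \<in> space (PiM UNIV D) \<Longrightarrow> Wstar \<xi> \<in> mixing_set E"
  shows "(\<integral>\<xi>. frob_sq ((colmat (\<lambda>i. gf i xbar) - avg_mat (colmat (\<lambda>i. gf i xbar))) ** Wstar \<xi>)
            \<partial>PiM UNIV D)
         \<le> 2 * (\<integral>\<xi>. frob_sq ((colmat (\<lambda>i. gF i xbar (\<xi> i))
                                 - avg_mat (colmat (\<lambda>i. gF i xbar (\<xi> i)))) ** Wstar \<xi>)
                  \<partial>PiM UNIV D)
           + 2 * real CARD('n) * \<sigma>^2"
proof -
  let ?P = "PiM UNIV D"
  have P: "prob_space ?P" by (intro prob_space_PiM prob)
  interpret P: prob_space ?P by fact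
  define G where "G = colmat (\<lambda>i. gf i xbar)"
  define Gx where "Gx \<xi> = colmat (\<lambda>i. gF i xbar (\<xi> i))" for \<xi>
  define g where "g j x = (norm (gF j xbar x - gf j xbar))^2" for j x
  define h where "h \<xi> = (\<Sum>j\<in>UNIV. g j (\<xi> j))" for \<xi>
  define L where "L \<xi> = frob_sq ((G - avg_mat G) ** Wstar \<xi>)" for \<xi>
  define R where "R \<xi> = frob_sq ((Gx \<xi> - avg_mat (Gx \<xi>)) ** Wstar \<xi>)" for \<xi>
  have pw: "L \<xi> \<le> 2 * R \<xi> + 2 * h \<xi>" if "\<xi> \<in> space ?P" for \<xi>
  proof -
    have "(G - avg_mat G) ** Wstar \<xi> = (Gx \<xi> - avg_mat (Gx \<xi>)) ** Wstar \<xi>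
        + ((G - Gx \<xi>) - avg_mat (G - Gx \<xi>)) ** Wstar \<xi>"
      by (simp add: avg_sub mat_rdistrib[symmetric])
    then have "L \<xi> \<le> 2 * R \<xi> + 2 * frob_sq (((G - Gx \<xi>) - avg_mat (G - Gx \<xi>)) ** Wstar \<xi>)"
      using frob_add unfolding L_def R_def by metis
    also have "frob_sq (((G - Gx \<xi>) - avg_mat (G - Gx \<xi>)) ** Wstar \<xi>) \<le> frob_sq (G - Gx \<xi>)"
      by (rule mix_bound[OF W_mix[OF that]])
    also have "G - Gx \<xi> = colmat (\<lambda>j. gf j xbar - gF j xbar (\<xi> j))"
      by (simp add: G_def Gx_def colmat_def vec_eq_iff)
    also have "frob_sq \<dots> = h \<xi>"
      by (simp add: frob_colmat h_def g_def norm_minus_commute)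
    finally show ?thesis by simp
  qed
  have Lb: "L \<xi> \<le> frob_sq G" if "\<xi> \<in> space ?P" for \<xi>
    unfolding L_def by (rule mix_bound[OF W_mix[OF that]])
  have Wm: "(\<lambda>x. Wstar x $ i $ j) \<in> borel_measurable ?P" for i j
    by (rule meas_nth2[OF W_meas])
  have gm[measurable]: "g j \<in> borel_measurable (D j)" for j
    unfolding g_def using gF_meas[of j xbar] by measurable
  have gFm: "(\<lambda>x. gF i xbar (x i) $ k) \<in> borel_measurable ?P" for i k
  proof -
    have "(\<lambda>x. x i) \<in> measurable ?P (D i)" by (rule measurable_component_singleton) simp
    moreover have "(\<lambda>y. gF i xbar y $ k) \<in> borel_measurable (D i)"
      by (rule meas_nth1[OF gF_meas])
    ultimately show ?thesis by (rule measurable_compose)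
  qed
  have Lm: "L \<in> borel_measurable ?P"
    unfolding L_def frob_sq_def matrix_matrix_mult_def using Wm by (simp; measurable)
  have Rm: "R \<in> borel_measurable ?P"
    unfolding R_def Gx_def frob_sq_def matrix_matrix_mult_def avg_mat_def colmat_def using Wm gFm
    by (simp; measurable)
  have gint: "integrable ?P (\<lambda>\<xi>. g j (\<xi> j))" and gI: "(\<integral>\<xi>. g j (\<xi> j) \<partial>?P) = (\<integral>x. g j x \<partial>D j)" for j
  proof -
    have c: "(\<lambda>x. x j) \<in> measurable ?P (D j)" by (rule measurable_component_singleton) simp
    have d: "distr ?P (D j) (\<lambda>x. x j) = D j" by (rule distr_PiM_component) (auto intro: prob)
    have "integrable (D j) (g j)" unfolding g_def by (rule var_int)
    then show "integrable ?P (\<lambda>\<xi>. g j (\<xi> j))"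
      using integrable_distr_eq[OF c gm] d by simp
    show "(\<integral>\<xi>. g j (\<xi> j) \<partial>?P) = (\<integral>x. g j x \<partial>D j)"
      using integral_distr[OF c gm] d by simp
  qed
  have hint: "integrable ?P h" unfolding h_def by (rule Bochner_Integration.integrable_sum) (rule gint)
  have L_nn: "0 \<le> L \<xi>" for \<xi> unfolding L_def frob_sq_def by (intro sum_nonneg) auto
  have Lint: "integrable ?P L"
  proof (rule P.integrable_const_bound[where B="frob_sq G"])
    show "AE x in ?P. norm (L x) \<le> frob_sq G" using Lb L_nn by (intro AE_I2) simp
  qed (rule Lm)
  have R_nn: "0 \<le> R \<xi>" for \<xi> unfolding R_def frob_sq_def by (intro sum_nonneg) auto
  have R_le: "R \<xi> \<le> 2 * L \<xi> + 2 * h \<xi>" if "\<xi> \<in> space ?P" for \<xi>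
  proof -
    have "(Gx \<xi> - avg_mat (Gx \<xi>)) ** Wstar \<xi> = (G - avg_mat G) ** Wstar \<xi>
        + ((Gx \<xi> - G) - avg_mat (Gx \<xi> - G)) ** Wstar \<xi>"
      by (simp add: avg_sub mat_rdistrib[symmetric])
    then have "R \<xi> \<le> 2 * L \<xi> + 2 * frob_sq (((Gx \<xi> - G) - avg_mat (Gx \<xi> - G)) ** Wstar \<xi>)"
      using frob_add unfolding L_def R_def by metis
    also have "frob_sq (((Gx \<xi> - G) - avg_mat (Gx \<xi> - G)) ** Wstar \<xi>) \<le> frob_sq (Gx \<xi> - G)"
      by (rule mix_bound[OF W_mix[OF that]])
    also have "Gx \<xi> - G = colmat (\<lambda>j. gF j xbar (\<xi> j) - gf j xbar)"
      by (simp add: G_def Gx_def colmat_def vec_eq_iff)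
    also have "frob_sq \<dots> = h \<xi>"
      by (simp add: frob_colmat h_def g_def)
    finally show ?thesis by simp
  qed
  have Rint: "integrable ?P R"
  proof (rule Bochner_Integration.integrable_bound[OF _ Rm])
    show "integrable ?P (\<lambda>\<xi>. 2 * L \<xi> + 2 * h \<xi>)" using Lint hint by auto
    show "AE x in ?P. norm (R x) \<le> norm (2 * L x + 2 * h x)"
      using R_le R_nn by (intro AE_I2) (smt (verit) real_norm_def)
  qed
  have "(\<integral>\<xi>. L \<xi> \<partial>?P) \<le> (\<integral>\<xi>. 2 * R \<xi> + 2 * h \<xi> \<partial>?P)"
    using pw Lint Rint hint by (intro integral_mono) auto
  also have "\<dots> = 2 * (\<integral>\<xi>. R \<xi> \<partial>?P) + 2 * (\<integral>\<xi>. h \<xi> \<partial>?P)"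
    using Rint hint by simp
  also have "(\<integral>\<xi>. h \<xi> \<partial>?P) = (\<Sum>j\<in>UNIV. \<integral>x. g j x \<partial>D j)"
    unfolding h_def using gint gI by (subst Bochner_Integration.integral_sum) auto
  also have "\<dots> \<le> real CARD('n) * \<sigma>^2"
    using var_bound[of xbar] unfolding g_def by (simp add: field_simps)
  finally show ?thesis
    unfolding L_def R_def G_def Gx_def by simp
qed

end
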